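(* Let $\mathbb{F}_q$ be the finite field with $q$ elements and characteristic $p$, let $m$ be a positive integer dividing $q-1$, and let $k$ be an integer with $0\le k\le q-1$. For $b\in\mathbb{F}_q$ let $N_m^*(k,b)$ be the number of $k$-tuples $(x_1,\dots,x_k)\in(\mathbb{F}_q^* )^k$ with pairwise distinct coordinates satisfying $x_1^m+x_2^m+\cdots+x_k^m=b$. Then for all $b\in\mathbb{F}_q^*$, $$\left|N_m^*(k,b)-\frac{(q-1)_k}{q}\right|\le\frac{2}{\sqrt q}\left(m\sqrt q+k+\frac qp\right)_k,$$ and for $b=0$, $$\left|N_m^*(k,0)-\frac{(q-1)_k}{q}\right|\le\left(m\sqrt q+k+\frac qp\right)_k.$$
   Context: For a real number $t$ and a nonnegative integer $k$, $(t)_k=t(t-1)\cdots(t-k+1)$ (with $(t)_0=1$). *)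

theory Defs
  imports Complex_Main "HOL-Library.Cardinality"
begin

definition falling_fact :: "real \<Rightarrow> nat \<Rightarrow> real" where
  "falling_fact t k = (\<Prod>i<k. (t - real i))"

definition Nstar :: "nat \<Rightarrow> nat \<Rightarrow> 'a::{finite,field} \<Rightarrow> nat" where
  "Nstar m k b = card {xs :: 'a list. length xs = k \<and> distinct xs \<and> 0 \<notin> set xs
                        \<and> (\<Sum>x\<leftarrow>xs. x ^ m) = b}"

end

theory Submission
  imports Defs "HOL-Computational_Algebra.Primes" "HOL-Computational_Algebra.Polynomial"
begin

definition esym :: "'b set \<Rightarrow> ('b \<Rightarrow> 'c::comm_ring_1) \<Rightarrow> nat \<Rightarrow> 'c" where
  "esym U g k = (\<Sum>A\<in>{A. A \<subseteq> U \<and> card A = k}. \<Prod>x\<in>A. g x)"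

definition pws :: "'b set \<Rightarrow> ('b \<Rightarrow> 'c::comm_ring_1) \<Rightarrow> nat \<Rightarrow> 'c" where
  "pws U g i = (\<Sum>x\<in>U. g x ^ i)"

definition Ep :: "'b set \<Rightarrow> ('b \<Rightarrow> 'c::comm_ring_1) \<Rightarrow> nat \<Rightarrow> nat \<Rightarrow> 'c" where
  "Ep U g i j = (\<Sum>B\<in>{B. B \<subseteq> U \<and> card B = j}. \<Sum>x\<in>B. g x ^ i * (\<Prod>y\<in>B-{x}. g y))"

lemma Ep_0: "finite U \<Longrightarrow> Ep U g i 0 = 0"
proof -
  assume "finite U"
  have "{B. B \<subseteq> U \<and> card B = 0} = {{}}" using \<open>finite U\<close> by auto (metis card_0_eq finite_subset empty_iff)
  thus ?thesis by (simp add: Ep_def)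
qed

lemma Ep_1: "finite U \<Longrightarrow> Ep U g 1 j = of_nat j * esym U g j"
proof -
  assume fU: "finite U"
  have "Ep U g 1 j = (\<Sum>B\<in>{B. B \<subseteq> U \<and> card B = j}. \<Sum>x\<in>B. (\<Prod>y\<in>B. g y))"
    unfolding Ep_def
  proof (intro sum.cong refl)
    fix B x assume "B \<in> {B. B \<subseteq> U \<and> card B = j}" "x \<in> B"
    hence "finite B" using fU by (auto intro: finite_subset)
    thus "g x ^ 1 * (\<Prod>y\<in>B-{x}. g y) = (\<Prod>y\<in>B. g y)" using \<open>x \<in> B\<close> by (simp add: prod.remove)
  qed
  also have "\<dots> = (\<Sum>B\<in>{B. B \<subseteq> U \<and> card B = j}. of_nat j * (\<Prod>y\<in>B. g y))"
    by (intro sum.cong refl) auto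
  finally show ?thesis by (simp add: esym_def sum_distrib_left)
qed

lemma Ep_step:
  assumes fU: "finite U"
  shows "esym U g j * pws U g i = Ep U g i (Suc j) + Ep U g (Suc i) j"
proof -
  define S where "S = {A. A \<subseteq> U \<and> card A = j}"
  define S' where "S' = {A. A \<subseteq> U \<and> card A = Suc j}"
  have finS: "finite S" "finite S'" unfolding S_def S'_def using fU by auto
  have fin: "finite A" if "A \<subseteq> U" for A using fU that by (rule finite_subset[rotated])
  have "esym U g j * pws U g i = (\<Sum>A\<in>S. (\<Prod>y\<in>A. g y) * (\<Sum>x\<in>U. g x ^ i))"
    unfolding esym_def pws_def S_def by (simp add: sum_distrib_right)
  also have "\<dots> = (\<Sum>A\<in>S. (\<Sum>x\<in>U-A. g x ^ i * (\<Prod>y\<in>A. g y)) + (\<Sum>x\<in>A. g x ^ i * (\<Prod>y\<in>A. g y)))"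
  proof (intro sum.cong refl)
    fix A assume "A \<in> S"
    hence "A \<subseteq> U" by (simp add: S_def)
    hence "(\<Sum>x\<in>U. g x ^ i) = (\<Sum>x\<in>U-A. g x ^ i) + (\<Sum>x\<in>A. g x ^ i)"
      using fU by (metis sum.subset_diff)
    thus "(\<Prod>y\<in>A. g y) * (\<Sum>x\<in>U. g x ^ i) = (\<Sum>x\<in>U-A. g x ^ i * (\<Prod>y\<in>A. g y)) + (\<Sum>x\<in>A. g x ^ i * (\<Prod>y\<in>A. g y))"
      by (simp add: distrib_left sum_distrib_left mult.commute)
  qed
  also have "\<dots> = (\<Sum>A\<in>S. \<Sum>x\<in>U-A. g x ^ i * (\<Prod>y\<in>A. g y)) + (\<Sum>A\<in>S. \<Sum>x\<in>A. g x ^ i * (\<Prod>y\<in>A. g y))"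
    by (rule sum.distrib)
  also have "(\<Sum>A\<in>S. \<Sum>x\<in>A. g x ^ i * (\<Prod>y\<in>A. g y)) = Ep U g (Suc i) j"
    unfolding Ep_def S_def[symmetric]
  proof (intro sum.cong refl)
    fix A x assume "A \<in> S" "x \<in> A"
    hence "finite A" using fin by (simp add: S_def)
    thus "g x ^ i * (\<Prod>y\<in>A. g y) = g x ^ Suc i * (\<Prod>y\<in>A-{x}. g y)" using \<open>x \<in> A\<close>
      by (simp add: prod.remove mult.assoc)
  qed
  also have "(\<Sum>A\<in>S. \<Sum>x\<in>U-A. g x ^ i * (\<Prod>y\<in>A. g y)) = Ep U g i (Suc j)"
  proof -
    have "(\<Sum>A\<in>S. \<Sum>x\<in>U-A. g x ^ i * (\<Prod>y\<in>A. g y)) = (\<Sum>(A,x)\<in>Sigma S (\<lambda>A. U - A). g x ^ i * (\<Prod>y\<in>A. g y))"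
      using finS fU by (subst sum.Sigma) auto
    also have "\<dots> = (\<Sum>(B,x)\<in>Sigma S' (\<lambda>B. B). g x ^ i * (\<Prod>y\<in>B-{x}. g y))"
    proof (rule sum.reindex_bij_witness[where i = "\<lambda>(B,x). (B - {x}, x)" and j = "\<lambda>(A,x). (insert x A, x)"])
      fix a assume "a \<in> Sigma S (\<lambda>A. U - A)"
      then obtain A x where a: "a = (A, x)" "A \<subseteq> U" "card A = j" "x \<in> U" "x \<notin> A" by (auto simp: S_def)
      have "finite A" using fin a(2) .
      show "(case case a of (A, x) \<Rightarrow> (insert x A, x) of (B, x) \<Rightarrow> (B - {x}, x)) = a" using a by auto
      show "(case a of (A, x) \<Rightarrow> (insert x A, x)) \<in> Sigma S' (\<lambda>B. B)" using a \<open>finite A\<close> by (auto simp: S'_def)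
      show "(case case a of (A, x) \<Rightarrow> (insert x A, x) of (B, x) \<Rightarrow> g x ^ i * prod g (B - {x})) = (case a of (A, x) \<Rightarrow> g x ^ i * prod g A)"
        using a by auto
    next
      fix b assume "b \<in> Sigma S' (\<lambda>B. B)"
      then obtain B x where b: "b = (B, x)" "B \<subseteq> U" "card B = Suc j" "x \<in> B" by (auto simp: S'_def)
      have "finite B" using fin b(2) .
      show "(case case b of (B, x) \<Rightarrow> (B - {x}, x) of (A, x) \<Rightarrow> (insert x A, x)) = b" using b by auto
      show "(case b of (B, x) \<Rightarrow> (B - {x}, x)) \<in> Sigma S (\<lambda>A. U - A)" using b \<open>finite B\<close> by (auto simp: S_def)
    qed
    also have "\<dots> = Ep U g i (Suc j)"
      unfolding Ep_def S'_def[symmetric] using finS fin by (subst sum.Sigma) (auto simp: S'_def)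
    finally show ?thesis .
  qed
  finally show ?thesis by (simp add: add.commute)
qed

lemma Ep_formula:
  assumes "finite U"
  shows "Ep U g i j = (\<Sum>l<j. (-1) ^ l * esym U g (j - Suc l) * pws U g (i + Suc l - 1))"
proof (induction j arbitrary: i)
  case 0
  then show ?case using Ep_0[OF assms] by simp
next
  case (Suc j)
  have "Ep U g i (Suc j) = esym U g j * pws U g i - Ep U g (Suc i) j"
    using Ep_step[OF assms, of g j i] by (simp add: algebra_simps)
  also have "\<dots> = esym U g j * pws U g i - (\<Sum>l<j. (-1) ^ l * esym U g (j - Suc l) * pws U g (Suc i + Suc l - 1))"
    using Suc.IH by simp
  also have "\<dots> = (\<Sum>l<Suc j. (-1) ^ l * esym U g (Suc j - Suc l) * pws U g (i + Suc l - 1))"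
    by (subst sum.lessThan_Suc_shift) (simp add: sum_negf[symmetric])
  finally show ?case .
qed

theorem newton_esym:
  assumes "finite U"
  shows "of_nat k * esym U g k = (\<Sum>l<k. (-1) ^ l * esym U g (k - Suc l) * pws U g (Suc l))"
  using Ep_formula[OF assms, of g 1 k] Ep_1[OF assms, of g k] by simp

lemma char_prime_ff: "prime CHAR('a::{finite,field})"
  by (rule prime_CHAR_semidom) (rule finite_imp_CHAR_pos, simp)

definition addsub :: "'a::{finite,field} set \<Rightarrow> bool" where
  "addsub H \<longleftrightarrow> 0 \<in> H \<and> (\<forall>x\<in>H. \<forall>y\<in>H. x + y \<in> H) \<and> (\<forall>x\<in>H. - x \<in> H)"

lemma addsub_of_nat_mult:
  assumes "addsub H" "y \<in> H" shows "of_nat j * y \<in> H"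
  using assms by (induction j) (auto simp: addsub_def algebra_simps)

lemma of_nat_mod_CHAR': "of_nat (x mod CHAR('a::semiring_1)) = (of_nat x :: 'a)"
  by (metis (no_types, opaque_lifting) add_0 div_mod_decomp
         mult_zero_right of_nat_CHAR of_nat_add of_nat_mult)

lemma of_int_mod_CHAR': "of_int (x mod int CHAR('a::ring_1)) = (of_int x :: 'a)"
proof -
  have "x = (x div int CHAR('a)) * int CHAR('a) + x mod int CHAR('a)" by simp
  hence "(of_int x :: 'a) = of_int (x div int CHAR('a)) * of_int (int CHAR('a)) + of_int (x mod int CHAR('a))"
    by (metis of_int_add of_int_mult)
  thus ?thesis by simp
qed

lemma exists_addchar:
  "\<exists>\<psi>::'a::{finite,field} \<Rightarrow> complex. (\<forall>x y. \<psi> (x + y) = \<psi> x * \<psi> y) \<and> (\<forall>x. norm (\<psi> x) = 1) \<and> (\<exists>x. \<psi> x \<noteq> 1)"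
proof -
  define p where "p = CHAR('a)"
  have pp: "prime p" unfolding p_def by (rule char_prime_ff)
  hence p2: "p \<ge> 2" by (simp add: prime_ge_2_nat)
  have card2: "card (UNIV::'a set) \<ge> 2"
  proof -
    have "{0::'a, 1} \<subseteq> UNIV" by simp
    hence "card {0::'a,1} \<le> card (UNIV::'a set)" by (intro card_mono) auto
    thus ?thesis by simp
  qed
  define S where "S = {H::'a set. addsub H \<and> H \<noteq> UNIV}"
  have "{0::'a} \<noteq> UNIV"
  proof
    assume eq: "{0::'a} = UNIV"
    have "card (UNIV::'a set) = card {0::'a}" by (simp only: eq)
    hence "card (UNIV::'a set) = 1" by simp
    thus False using card2 by simp
  qed
  hence "{0} \<in> S" by (auto simp: S_def addsub_def)
  have finS: "finite S" by simp
  have "Max (card ` S) \<in> card ` S" using \<open>{0} \<in> S\<close> finS by (intro Max_in) auto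
  then obtain H0 where "H0 \<in> S" "card H0 = Max (card ` S)" by auto
  hence "\<exists>H. H \<in> S \<and> (\<forall>H'\<in>S. card H' \<le> card H)" using finS by (metis Max_ge finite_imageI imageI)
  then obtain H :: "'a set" where HS: "H \<in> S" and HSm: "\<forall>H'\<in>S. card H' \<le> card H" by blast
  have H: "addsub H" "H \<noteq> UNIV" using HS unfolding S_def by auto
  have Hmax: "card H' \<le> card H" if "addsub H'" "H' \<noteq> UNIV" for H' :: "'a set"
    using HSm that unfolding S_def by blast
  obtain x where x: "x \<notin> H" using H(2) by blast
  define H' where "H' = {h + of_nat j * x | h j. h \<in> H}"
  have "addsub H'"
    unfolding addsub_def
  proof safe
    show "0 \<in> H'" unfolding H'_def using H(1) by (auto simp: addsub_def intro!: exI[of _ 0])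
  next
    fix a b assume "a \<in> H'" "b \<in> H'"
    then obtain h1 j1 h2 j2 where "a = h1 + of_nat j1 * x" "h1 \<in> H" "b = h2 + of_nat j2 * x" "h2 \<in> H"
      unfolding H'_def by blast
    thus "a + b \<in> H'" unfolding H'_def using H(1)
      by (auto simp: addsub_def algebra_simps intro!: exI[of _ "h1+h2"] exI[of _ "j1+j2"])
  next
    fix a assume "a \<in> H'"
    then obtain h j where a: "a = h + of_nat j * x" "h \<in> H" unfolding H'_def by blast
    have "(of_nat (j * (p - 1)) :: 'a) = of_nat j * (of_nat p - 1)"
      using p2 by (simp add: of_nat_diff)
    also have "\<dots> = - of_nat j" by (simp add: p_def)
    finally have "-a = (-h) + of_nat (j * (p - 1)) * x" using a by simp
    moreover have "-h \<in> H" using a(2) H(1) by (auto simp: addsub_def)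
    ultimately show "- a \<in> H'" unfolding H'_def by blast
  qed
  have "H \<subseteq> H'"
  proof
    fix h assume "h \<in> H" thus "h \<in> H'" unfolding H'_def by (intro CollectI exI[of _ h] exI[of _ 0]) simp
  qed
  moreover have "x \<in> H'" unfolding H'_def using H(1)
    by (intro CollectI exI[of _ 0] exI[of _ 1]) (simp add: addsub_def)
  ultimately have "H \<subset> H'" using x by blast
  hence "card H < card H'" by (intro psubset_card_mono) auto
  hence H'U: "H' = UNIV" using Hmax[OF \<open>addsub H'\<close>] by fastforce
  have key: "int p dvd d" if "of_int d * x \<in> H" for d :: int
  proof (rule ccontr)
    assume nd: "\<not> int p dvd d"
    define d' where "d' = nat (d mod int p)"
    have "of_nat d' = (of_int d :: 'a)"
    proof -
      have "d mod int p \<ge> 0" using p2 by simp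
      hence "(of_nat d' :: 'a) = of_int (d mod int p)" unfolding d'_def by (simp add: of_nat_nat)
      also have "\<dots> = of_int d" using of_int_mod_CHAR'[of d, where 'a='a] unfolding p_def .
      finally show ?thesis .
    qed
    have m0: "0 \<le> d mod int p" "d mod int p < int p" using p2 by simp_all
    have "d mod int p \<noteq> 0" using nd by (simp add: dvd_eq_mod_eq_0)
    hence d0: "d' \<noteq> 0" "d' < p" using m0 unfolding d'_def by linarith+
    hence "\<not> p dvd d'" by (simp add: nat_dvd_not_less)
    hence cop: "coprime d' p" using prime_imp_coprime[OF pp] coprime_commute by blast
    have d'H: "of_nat d' * x \<in> H" using that \<open>of_nat d' = (of_int d :: 'a)\<close> by simp
    obtain u v where uv: "d' * u = p * v + gcd d' p" using bezout_nat[OF \<open>d' \<noteq> 0\<close>, of p] by blast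
    hence "d' * u = p * v + 1" using cop by simp
    hence "(of_nat (d' * u) :: 'a) = of_nat p * of_nat v + 1" by simp
    hence "(of_nat (d' * u) :: 'a) = 1" by (simp add: p_def)
    hence "(of_nat u * (of_nat d' * x) :: 'a) = x"
      by (metis mult.assoc mult.commute mult_1 of_nat_mult)
    moreover have "of_nat u * (of_nat d' * x) \<in> H" by (rule addsub_of_nat_mult[OF H(1) d'H])
    ultimately show False using x by metis
  qed
  define z :: complex where "z = cis (2 * pi / p)"
  have zp: "z ^ p = 1" using p2 by (simp add: z_def DeMoivre)
  have zm: "z ^ i = z ^ (i mod p)" for i
  proof -
    have "z ^ i = z ^ (p * (i div p) + i mod p)" by simp
    also have "\<dots> = (z ^ p) ^ (i div p) * z ^ (i mod p)" by (simp only: power_add power_mult)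
    finally show ?thesis using zp by simp
  qed
  have zmod: "z ^ i = z ^ j" if "int p dvd (int i - int j)" for i j
  proof -
    have "int i mod int p = int j mod int p" using that by (simp add: mod_eq_dvd_iff)
    hence "int (i mod p) = int (j mod p)" by (simp add: zmod_int)
    hence "i mod p = j mod p" by simp
    thus ?thesis using zm[of i] zm[of j] by simp
  qed
  have z1: "z \<noteq> 1"
  proof
    assume "z = 1"
    hence "cos (2 * pi / p) = 1" by (simp add: z_def complex_eq_iff)
    then obtain n :: int where n: "2 * pi / p = real_of_int n * 2 * pi" using cos_one_2pi_int by blast
    hence "(2*pi) * (1 / real p) = (2*pi) * real_of_int n" by simp
    hence "1 / real p = real_of_int n" using pi_gt_zero by (simp only: mult_cancel_left) simp
    moreover have "0 < 1 / real p" "1 / real p < 1" using p2 by auto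
    ultimately have "0 < real_of_int n" "real_of_int n < 1" by simp_all
    hence "0 < n" "n < 1" by simp_all
    thus False by simp
  qed
  define \<psi> where "\<psi> y = z ^ (SOME j. y - of_nat j * x \<in> H)" for y
  have ex: "\<exists>j. y - of_nat j * x \<in> H" for y
  proof -
    have "y \<in> H'" using H'U by simp
    then obtain h j where "y = h + of_nat j * x" "h \<in> H" unfolding H'_def by blast
    thus ?thesis by (intro exI[of _ j]) simp
  qed
  have psi_eq: "\<psi> y = z ^ j" if "y - of_nat j * x \<in> H" for y j
  proof -
    define j0 where "j0 = (SOME j. y - of_nat j * x \<in> H)"
    have j0: "y - of_nat j0 * x \<in> H" unfolding j0_def by (rule someI_ex[OF ex])
    have "(y - of_nat j * x) + - (y - of_nat j0 * x) \<in> H" using H(1) j0 that unfolding addsub_def by blast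
    hence "of_int (int j0 - int j) * x \<in> H" by (simp add: algebra_simps)
    hence "int p dvd (int j0 - int j)" by (rule key)
    hence "z ^ j0 = z ^ j" by (rule zmod)
    thus ?thesis unfolding \<psi>_def j0_def by simp
  qed
  have hom: "\<psi> (a + b) = \<psi> a * \<psi> b" for a b
  proof -
    obtain i j where i: "a - of_nat i * x \<in> H" and j: "b - of_nat j * x \<in> H" using ex by blast
    have "(a - of_nat i * x) + (b - of_nat j * x) \<in> H" using H(1) i j unfolding addsub_def by blast
    hence "(a + b) - of_nat (i + j) * x \<in> H" by (simp add: algebra_simps)
    hence "\<psi> (a + b) = z ^ (i + j)" by (rule psi_eq)
    thus ?thesis using psi_eq[OF i] psi_eq[OF j] by (simp add: power_add)
  qed
  have nrm: "norm (\<psi> y) = 1" for y unfolding \<psi>_def z_def by (simp add: norm_power)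
  have "\<psi> x = z" using psi_eq[of x 1] H(1) by (simp add: addsub_def)
  thus ?thesis using hom nrm z1 by metis
qed

locale addchar =
  fixes \<psi> :: "'a::{finite,field} \<Rightarrow> complex" and m :: nat
  assumes hom: "\<And>x y. \<psi> (x + y) = \<psi> x * \<psi> y"
      and nrm: "\<And>x. norm (\<psi> x) = 1"
      and nontriv: "\<exists>x. \<psi> x \<noteq> 1"
      and mpos: "m > 0"
begin

lemma psi0: "\<psi> 0 = 1"
proof -
  have "\<psi> 0 * \<psi> 0 = \<psi> 0 * 1" using hom[of 0 0] by simp
  moreover have "\<psi> 0 \<noteq> 0" using nrm[of 0] by auto
  ultimately show ?thesis by (metis mult_left_cancel)
qed

lemma psi_nz: "\<psi> x \<noteq> 0" using nrm[of x] by auto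

lemma psi_sum: "\<psi> (sum f A) = (\<Prod>x\<in>A. \<psi> (f x))"
  by (induction A rule: infinite_finite_induct) (simp_all add: psi0 hom)

lemma psi_neg: "\<psi> (-x) = cnj (\<psi> x)"
proof -
  have "\<psi> x * \<psi> (-x) = 1" using hom[of x "-x"] psi0 by simp
  moreover have "\<psi> x * cnj (\<psi> x) = 1"
    using complex_norm_square[of "\<psi> x"] nrm[of x] by simp
  ultimately show ?thesis using psi_nz[of x] by (metis mult_left_cancel)
qed

lemma psi_pow: "\<psi> x ^ i = \<psi> (of_nat i * x)"
  by (induction i) (simp_all add: psi0 hom distrib_right)

lemma sum_psi: "(\<Sum>x\<in>UNIV. \<psi> x) = 0"
proof -
  obtain a where a: "\<psi> a \<noteq> 1" using nontriv by blast
  have "(\<Sum>x\<in>UNIV. \<psi> (x + a)) = (\<Sum>x\<in>UNIV. \<psi> x)"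
    by (rule sum.reindex_bij_witness[where i = "\<lambda>x. x - a" and j = "\<lambda>x. x + a"]) auto
  hence "\<psi> a * (\<Sum>x\<in>UNIV. \<psi> x) = 1 * (\<Sum>x\<in>UNIV. \<psi> x)"
    by (simp add: hom sum_distrib_left mult.commute)
  thus ?thesis using a by (metis mult_right_cancel)
qed

lemma orth: "(\<Sum>c\<in>UNIV. \<psi> (c * y)) = (if y = 0 then of_nat CARD('a) else 0)"
proof (cases "y = 0")
  case True thus ?thesis by (simp add: psi0)
next
  case False
  have "(\<Sum>c\<in>UNIV. \<psi> (c * y)) = (\<Sum>x\<in>UNIV. \<psi> x)"
    by (rule sum.reindex_bij_witness[where i = "\<lambda>x. x / y" and j = "\<lambda>x. x * y"]) (use False in auto)
  thus ?thesis using False sum_psi by simp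
qed

lemma sum_scale: "u \<noteq> 0 \<Longrightarrow> (\<Sum>x\<in>-{0}. h (u * x)) = (\<Sum>x\<in>-{0::'a}. (h x :: 'b::comm_monoid_add))"
  by (rule sum.reindex_bij_witness[where i = "\<lambda>x. x / u" and j = "\<lambda>x. u * x"]) auto

lemma card_nz: "card (-{0::'a}) = CARD('a) - 1"
  by (simp add: Compl_eq_Diff_UNIV card_Diff_singleton)

lemma q_ge2: "CARD('a) \<ge> 2"
proof -
  have "card {0::'a,1} \<le> card (UNIV::'a set)" by (intro card_mono) auto
  thus ?thesis by simp
qed

definition T :: "'a \<Rightarrow> complex" where "T c = (\<Sum>x\<in>-{0}. \<psi> (c * x ^ m))"

lemma T0: "T 0 = of_nat (CARD('a) - 1)"
  by (simp add: T_def psi0 card_nz)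

lemma T_scale: "t \<noteq> 0 \<Longrightarrow> T (c * t ^ m) = T c"
  unfolding T_def using sum_scale[of t "\<lambda>x. \<psi> (c * x ^ m)"] by (simp add: power_mult_distrib mult.assoc)

lemma parseval:
  "(\<Sum>c\<in>UNIV. (cmod (\<Sum>x\<in>U. \<psi> (c * g x)))^2) = real CARD('a) * (\<Sum>x\<in>U. \<Sum>y\<in>U. if g x = g y then 1 else 0)"
proof -
  have "complex_of_real (\<Sum>c\<in>UNIV. (cmod (\<Sum>x\<in>U. \<psi> (c * g x)))^2)
      = (\<Sum>c\<in>UNIV. (\<Sum>x\<in>U. \<psi> (c * g x)) * cnj (\<Sum>x\<in>U. \<psi> (c * g x)))"
    by (simp only: of_real_sum complex_norm_square)
  also have "\<dots> = (\<Sum>c\<in>UNIV. \<Sum>x\<in>U. \<Sum>y\<in>U. \<psi> (c * (g x - g y)))"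
  proof (intro sum.cong refl)
    fix c
    have "(\<Sum>x\<in>U. \<psi> (c * g x)) * cnj (\<Sum>x\<in>U. \<psi> (c * g x)) = (\<Sum>x\<in>U. \<Sum>y\<in>U. \<psi> (c * g x) * \<psi> (- (c * g y)))"
      by (simp add: sum_product psi_neg)
    also have "\<dots> = (\<Sum>x\<in>U. \<Sum>y\<in>U. \<psi> (c * (g x - g y)))"
      by (simp add: hom[symmetric] algebra_simps)
    finally show "(\<Sum>x\<in>U. \<psi> (c * g x)) * cnj (\<Sum>x\<in>U. \<psi> (c * g x)) = (\<Sum>x\<in>U. \<Sum>y\<in>U. \<psi> (c * (g x - g y)))" .
  qed
  also have "\<dots> = (\<Sum>x\<in>U. \<Sum>y\<in>U. \<Sum>c\<in>UNIV. \<psi> (c * (g x - g y)))"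
    by (subst sum.swap) (simp add: sum.swap[of _ UNIV])
  also have "\<dots> = (\<Sum>x\<in>U. \<Sum>y\<in>U. if g x = g y then of_nat CARD('a) else 0)"
    by (simp add: orth)
  also have "\<dots> = complex_of_real (real CARD('a) * (\<Sum>x\<in>U. \<Sum>y\<in>U. if g x = g y then 1 else 0))"
    by (simp add: sum_distrib_left if_distrib cong: if_cong)
  finally show ?thesis by (simp only: of_real_eq_iff)
qed

lemma roots_bound: "card {y::'a. y ^ m = a} \<le> m"
proof -
  define P where "P = monom (1::'a) m - [:a:]"
  have coeffm: "coeff P m = 1" using mpos by (cases m) (simp_all add: P_def)
  hence "P \<noteq> 0" by auto
  have "degree P \<le> m" unfolding P_def
    by (rule degree_diff_le) (simp_all add: degree_monom_le)
  have "{y::'a. y ^ m = a} = {y. poly P y = 0}" by (auto simp: P_def poly_monom)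
  also have "card \<dots> \<le> degree P" by (rule card_poly_roots_bound[OF \<open>P \<noteq> 0\<close>])
  finally show ?thesis using \<open>degree P \<le> m\<close> by simp
qed

lemma count_pairs:
  "(\<Sum>x\<in>-{0::'a}. \<Sum>y\<in>-{0}. if x ^ m = y ^ m then 1 else (0::real)) \<le> real m * (real CARD('a) - 1)"
proof -
  have "(\<Sum>x\<in>-{0::'a}. \<Sum>y\<in>-{0}. if x ^ m = y ^ m then 1 else (0::real)) \<le> (\<Sum>x\<in>-{0::'a}. real m)"
  proof (rule sum_mono)
    fix x :: 'a
    have "(\<Sum>y\<in>-{0}. if x ^ m = y ^ m then 1 else (0::real)) = real (card {y. y \<noteq> 0 \<and> x ^ m = y ^ m})"
      by (simp add: sum.If_cases) (rule arg_cong[where f=card], auto)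
    also have "card {y. y \<noteq> 0 \<and> x ^ m = y ^ m} \<le> card {y::'a. y ^ m = x ^ m}" by (intro card_mono) auto
    also have "\<dots> \<le> m" by (rule roots_bound)
    finally show "(\<Sum>y\<in>-{0}. if x ^ m = y ^ m then 1 else (0::real)) \<le> real m" by simp
  qed
  also have "\<dots> = real m * (real CARD('a) - 1)" using card_nz q_ge2 by (simp add: of_nat_diff)
  finally show ?thesis .
qed

lemma sumT2_nz:
  "(\<Sum>c\<in>-{0}. (cmod (T c))^2) \<le> (real CARD('a) - 1) * (real CARD('a) * m - real CARD('a) + 1)"
proof -
  have "(\<Sum>c\<in>UNIV. (cmod (T c))^2) = real CARD('a) * (\<Sum>x\<in>-{0::'a}. \<Sum>y\<in>-{0}. if x ^ m = y ^ m then 1 else 0)"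
    unfolding T_def by (rule parseval)
  also have "\<dots> \<le> real CARD('a) * (real m * (real CARD('a) - 1))"
    by (intro mult_left_mono count_pairs) simp
  finally have A: "(\<Sum>c\<in>UNIV. (cmod (T c))^2) \<le> real CARD('a) * (real m * (real CARD('a) - 1))" .
  have "(\<Sum>c\<in>UNIV. (cmod (T c))^2) = (cmod (T 0))^2 + (\<Sum>c\<in>-{0}. (cmod (T c))^2)"
    by (subst sum.remove[of UNIV 0]) (simp_all add: Compl_eq_Diff_UNIV)
  moreover have "cmod (T 0) = real (CARD('a) - 1)" by (simp only: T0 norm_of_nat)
  moreover have "real (CARD('a) - 1) = real CARD('a) - 1" using q_ge2 by (simp add: of_nat_diff)
  ultimately show ?thesis using A by (simp add: algebra_simps power2_eq_square)
qed

definition D2 :: real where "D2 = real CARD('a) * m - real CARD('a) + 1"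
definition C :: real where "C = sqrt (real m * D2)"

lemma D2_pos: "D2 \<ge> 1"
  using mpos by (simp add: D2_def algebra_simps)

lemma T_bound: assumes "c \<noteq> 0" shows "cmod (T c) \<le> C"
proof -
  define Hc where "Hc = (\<lambda>t. c * t ^ m) ` (-{0})"
  have Hsub: "Hc \<subseteq> -{0}" using assms by (auto simp: Hc_def)
  have "-{0} \<subseteq> (\<Union>h\<in>Hc. {t. c * t ^ m = h})" by (auto simp: Hc_def)
  hence "card (-{0::'a}) \<le> card (\<Union>h\<in>Hc. {t. c * t ^ m = h})" by (intro card_mono) auto
  also have "\<dots> \<le> (\<Sum>h\<in>Hc. card {t. c * t ^ m = h})" by (rule card_UN_le) simp
  also have "\<dots> \<le> (\<Sum>h\<in>Hc. m)"
  proof (rule sum_mono)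
    fix h
    have "{t. c * t ^ m = h} = {t. t ^ m = h / c}" using assms by (auto simp: field_simps)
    thus "card {t. c * t ^ m = h} \<le> m" using roots_bound by simp
  qed
  finally have "CARD('a) - 1 \<le> m * card Hc" using card_nz by (simp add: mult.commute)
  hence "real (CARD('a) - 1) \<le> real (m * card Hc)" by (simp only: of_nat_le_iff)
  hence cardH: "real CARD('a) - 1 \<le> real m * real (card Hc)"
    using q_ge2 by (simp add: of_nat_diff)
  have "(\<Sum>h\<in>Hc. (cmod (T h))^2) = (\<Sum>h\<in>Hc. (cmod (T c))^2)"
  proof (intro sum.cong refl)
    fix h assume "h \<in> Hc"
    then obtain t where "t \<noteq> 0" "h = c * t ^ m" by (auto simp: Hc_def)
    thus "(cmod (T h))^2 = (cmod (T c))^2" by (simp add: T_scale)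
  qed
  hence "real (card Hc) * (cmod (T c))^2 \<le> (\<Sum>h\<in>-{0}. (cmod (T h))^2)"
    using sum_mono2[of "-{0}" Hc "\<lambda>h. (cmod (T h))^2"] Hsub by simp
  also have "\<dots> \<le> (real CARD('a) - 1) * D2" using sumT2_nz by (simp add: D2_def)
  finally have B: "real (card Hc) * (cmod (T c))^2 \<le> (real CARD('a) - 1) * D2" .
  have "(real CARD('a) - 1) * (cmod (T c))^2 \<le> real m * real (card Hc) * (cmod (T c))^2"
    using cardH by (intro mult_right_mono) auto
  also have "\<dots> \<le> real m * ((real CARD('a) - 1) * D2)" using B mpos
    by (simp add: mult.assoc mult_left_mono)
  finally have "(real CARD('a) - 1) * (cmod (T c))^2 \<le> (real CARD('a) - 1) * (real m * D2)"
    by (simp add: algebra_simps)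
  moreover have "real CARD('a) - 1 > 0" using q_ge2 by simp
  ultimately have "(cmod (T c))^2 \<le> real m * D2" by simp
  thus ?thesis unfolding C_def by (simp add: real_le_rsqrt)
qed

end

lemma sum_lessThan_add_block:
  fixes a r :: nat
  shows "(\<Sum>l<a + r. f l) = (\<Sum>l<a. f l) + (\<Sum>i<r. f (a + i) :: 'b::comm_monoid_add)"
  by (induction r) (simp_all add: add.assoc)

lemma block_lemma:
  fixes g :: "nat \<Rightarrow> real"
  assumes mono: "\<And>i j. i \<le> j \<Longrightarrow> g j \<le> g i" and nn: "\<And>i. g i \<ge> 0" and p: "p > 0"
  shows "real p * (\<Sum>l<k. if p dvd Suc l then g (Suc l) else 0) \<le> (\<Sum>l<k. g (Suc l))"
proof -
  have "\<exists>N. p * N \<le> k \<and> real p * (\<Sum>l<k. if p dvd Suc l then g (Suc l) else 0) \<le> (\<Sum>l<p * N. g (Suc l))"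
  proof (induction k)
    case 0 thus ?case by (intro exI[of _ 0]) simp
  next
    case (Suc k)
    then obtain N where N: "p * N \<le> k"
      "real p * (\<Sum>l<k. if p dvd Suc l then g (Suc l) else 0) \<le> (\<Sum>l<p * N. g (Suc l))" by blast
    show ?case
    proof (cases "p dvd Suc k")
      case False
      thus ?thesis using N by (intro exI[of _ N]) simp
    next
      case True
      then obtain d where d: "Suc k = p * d" by blast
      have "p * N < p * d" using N(1) d by linarith
      hence "N < d" by simp
      hence Nd: "p * (N + 1) \<le> Suc k" using d by (metis Suc_leI mult_le_mono2 add.commute plus_1_eq_Suc)
      have blk: "real p * g (Suc k) \<le> (\<Sum>i<p. g (Suc (p * N + i)))"
      proof -
        have "(\<Sum>i<p. g (Suc k)) \<le> (\<Sum>i<p. g (Suc (p * N + i)))"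
        proof (rule sum_mono)
          fix i assume "i \<in> {..<p}"
          hence "Suc (p * N + i) \<le> Suc k" using Nd by (simp add: algebra_simps)
          thus "g (Suc k) \<le> g (Suc (p * N + i))" by (rule mono)
        qed
        thus ?thesis by simp
      qed
      have "real p * (\<Sum>l<Suc k. if p dvd Suc l then g (Suc l) else 0)
          = real p * (\<Sum>l<k. if p dvd Suc l then g (Suc l) else 0) + real p * g (Suc k)"
        using True by (simp add: distrib_left)
      also have "\<dots> \<le> (\<Sum>l<p * N. g (Suc l)) + (\<Sum>i<p. g (Suc (p * N + i)))"
        using N(2) blk by linarith
      also have "\<dots> = (\<Sum>l<p * (N + 1). g (Suc l))"
      proof -
        have "p * (N + 1) = p * N + p" by simp
        thus ?thesis by (simp only: sum_lessThan_add_block)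
      qed
      finally show ?thesis using Nd by (intro exI[of _ "N + 1"]) simp
    qed
  qed
  then obtain N where N: "p * N \<le> k"
    "real p * (\<Sum>l<k. if p dvd Suc l then g (Suc l) else 0) \<le> (\<Sum>l<p * N. g (Suc l))" by blast
  have "(\<Sum>l<p * N. g (Suc l)) \<le> (\<Sum>l<k. g (Suc l))"
    using N(1) by (intro sum_mono2) (auto simp: nn)
  thus ?thesis using N(2) by linarith
qed

context addchar
begin

definition AA :: "nat \<Rightarrow> 'a set set" where "AA k = {A. A \<subseteq> -{0} \<and> card A = k}"
definition e :: "nat \<Rightarrow> 'a \<Rightarrow> complex" where "e k c = esym (-{0}) (\<lambda>x. \<psi> (c * x ^ m)) k"
definition nn :: "nat \<Rightarrow> 'a \<Rightarrow> nat" where "nn k b = card {A \<in> AA k. (\<Sum>x\<in>A. x ^ m) = b}"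
definition pw :: "nat \<Rightarrow> 'a \<Rightarrow> complex" where "pw i c = T (of_nat i * c)"

lemma e_alt: "e k c = (\<Sum>A\<in>AA k. \<psi> (c * (\<Sum>x\<in>A. x ^ m)))"
  unfolding e_def esym_def AA_def by (simp add: psi_sum sum_distrib_left)

lemma newton_e: "of_nat k * e k c = (\<Sum>l<k. (-1) ^ l * e (k - Suc l) c * pw (Suc l) c)"
proof -
  have "pws (-{0}) (\<lambda>x. \<psi> (c * x ^ m)) (Suc l) = pw (Suc l) c" for l
    unfolding pws_def pw_def T_def by (simp only: psi_pow mult.assoc)
  thus ?thesis using newton_esym[of "-{0::'a}" k "\<lambda>x. \<psi> (c * x ^ m)"] unfolding e_def by simp
qed

lemma AA0: "AA 0 = {{}}"
  unfolding AA_def by auto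

lemma e_0: "e 0 c = 1"
  by (simp add: e_alt AA0 psi0)

lemma card_AA: "card (AA k) = (CARD('a) - 1) choose k"
  unfolding AA_def using n_subsets[of "-{0::'a}" k] card_nz by simp

lemma e_at0: "e k 0 = of_nat ((CARD('a) - 1) choose k)"
  by (simp add: e_alt psi0 card_AA)

lemma count_n: "of_nat CARD('a) * of_nat (nn k b) = (\<Sum>c\<in>UNIV. \<psi> (-(c * b)) * e k c)"
proof -
  have "(\<Sum>c\<in>UNIV. \<psi> (-(c * b)) * e k c) = (\<Sum>c\<in>UNIV. \<Sum>A\<in>AA k. \<psi> (c * ((\<Sum>x\<in>A. x ^ m) - b)))"
    unfolding e_alt by (simp add: sum_distrib_left hom[symmetric] algebra_simps)
  also have "\<dots> = (\<Sum>A\<in>AA k. \<Sum>c\<in>UNIV. \<psi> (c * ((\<Sum>x\<in>A. x ^ m) - b)))"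
    by (rule sum.swap)
  also have "\<dots> = (\<Sum>A\<in>AA k. if (\<Sum>x\<in>A. x ^ m) = b then of_nat CARD('a) else 0)"
    by (simp add: orth)
  also have "\<dots> = (\<Sum>A\<in>{A \<in> AA k. (\<Sum>x\<in>A. x ^ m) = b}. of_nat CARD('a))"
    by (subst sum.inter_filter) simp_all
  also have "\<dots> = of_nat CARD('a) * of_nat (nn k b)" by (simp add: nn_def)
  finally show ?thesis by simp
qed

lemma nn_scale: assumes t: "t \<noteq> 0" shows "nn k (b * t ^ m) = nn k b"
proof -
  let ?S = "{A \<in> AA k. (\<Sum>x\<in>A. x ^ m) = b}"
  let ?S' = "{A \<in> AA k. (\<Sum>x\<in>A. x ^ m) = b * t ^ m}"
  have inj: "inj_on (\<lambda>x. s * x) A" if "s \<noteq> 0" for s :: 'a and A using that by (auto simp: inj_on_def)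
  have sumimg: "(\<Sum>y\<in>(\<lambda>x. s * x) ` A. y ^ m) = s ^ m * (\<Sum>x\<in>A. x ^ m)" if "s \<noteq> 0" for s :: 'a and A
    using that by (simp add: sum.reindex[OF inj] power_mult_distrib sum_distrib_left)
  have cardimg: "card ((\<lambda>x. s * x) ` A) = card A" if "s \<noteq> 0" for s :: 'a and A
    using that by (simp add: card_image[OF inj])
  have it1: "inverse t * (t * x) = x" for x using t by (simp add: mult.assoc[symmetric])
  have it2: "t * (inverse t * x) = x" for x using t by (simp add: mult.assoc[symmetric])
  have "bij_betw (\<lambda>A. (\<lambda>x. t * x) ` A) ?S ?S'"
  proof (rule bij_betw_byWitness[where f' = "\<lambda>A. (\<lambda>x. inverse t * x) ` A"])
    show "\<forall>a\<in>?S. (\<lambda>x. inverse t * x) ` (\<lambda>x. t * x) ` a = a" by (simp add: image_image it1)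
    show "\<forall>a\<in>?S'. (\<lambda>x. t * x) ` (\<lambda>x. inverse t * x) ` a = a" by (simp add: image_image it2)
    show "(\<lambda>A. (\<lambda>x. t * x) ` A) ` ?S \<subseteq> ?S'"
    proof
      fix B assume "B \<in> (\<lambda>A. (\<lambda>x. t * x) ` A) ` ?S"
      then obtain A where A: "A \<in> ?S" "B = (\<lambda>x. t * x) ` A" by blast
      have "(\<Sum>x\<in>B. x ^ m) = t ^ m * b" using A t by (simp add: sumimg)
      moreover have "card B = k" using A t by (simp add: cardimg AA_def)
      moreover have "B \<subseteq> -{0}" using A t by (auto simp: AA_def)
      ultimately show "B \<in> ?S'" by (simp add: AA_def mult.commute)
    qed
    show "(\<lambda>A. (\<lambda>x. inverse t * x) ` A) ` ?S' \<subseteq> ?S"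
    proof
      fix B assume "B \<in> (\<lambda>A. (\<lambda>x. inverse t * x) ` A) ` ?S'"
      then obtain A where A: "A \<in> ?S'" "B = (\<lambda>x. inverse t * x) ` A" by blast
      have "(\<Sum>x\<in>B. x ^ m) = inverse t ^ m * (b * t ^ m)" using A t by (simp add: sumimg)
      also have "\<dots> = b" using t by (simp add: power_inverse field_simps)
      finally show "B \<in> ?S" using A t by (auto simp: AA_def cardimg)
    qed
  qed
  thus ?thesis unfolding nn_def by (simp add: bij_betw_same_card)
qed

definition pib :: "nat \<Rightarrow> real" where
  "pib i = (if CHAR('a) dvd i then real CARD('a) - 1 else C)"

lemma pw_dvd: assumes "CHAR('a) dvd i" shows "pw i c = of_nat (CARD('a) - 1)"
proof -
  have "(of_nat i :: 'a) = 0" using assms by (simp add: of_nat_eq_0_iff_char_dvd)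
  thus ?thesis by (simp only: pw_def T0 mult_zero_left)
qed

lemma pw_bound: assumes "c \<noteq> 0" shows "cmod (pw i c) \<le> pib i"
proof (cases "CHAR('a) dvd i")
  case True
  have "cmod (pw i c) = real (CARD('a) - 1)" by (simp only: pw_dvd[OF True] norm_of_nat)
  thus ?thesis using True q_ge2 by (simp add: pib_def of_nat_diff)
next
  case False
  hence "(of_nat i :: 'a) \<noteq> 0" by (simp add: of_nat_eq_0_iff_char_dvd)
  hence "of_nat i * c \<noteq> 0" using assms by simp
  thus ?thesis using False T_bound unfolding pw_def pib_def by simp
qed

lemma C_ge1: "C \<ge> 1"
proof -
  have "real m * D2 \<ge> 1" using mpos D2_pos by (metis mult_ge1_I of_nat_0_less_iff of_nat_1 of_nat_le_iff Suc_leI One_nat_def)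
  thus ?thesis unfolding C_def by simp
qed

definition X :: real where "X = C + (real CARD('a) - 1) / real CHAR('a)"
definition u :: "nat \<Rightarrow> real" where "u k = pochhammer X k / fact k"

lemma CHAR_pos': "CHAR('a) > 0" by (rule finite_imp_CHAR_pos) simp

lemma X_ge1: "X \<ge> 1"
proof -
  have "(real CARD('a) - 1) / real CHAR('a) \<ge> 0" using q_ge2 by simp
  thus ?thesis using C_ge1 unfolding X_def by linarith
qed

lemma pib_nonneg: "pib i \<ge> 0"
  using C_ge1 q_ge2 unfolding pib_def by auto

lemma u_nonneg: "u k \<ge> 0"
  using X_ge1 unfolding u_def by (simp add: pochhammer_nonneg)

lemma u_Suc: "u (Suc k) = u k * (X + real k) / (real k + 1)"
  unfolding u_def by (simp add: pochhammer_Suc field_simps)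

lemma u_rec: "real k * u k = X * (\<Sum>l<k. u l)"
proof (induction k)
  case 0 thus ?case by simp
next
  case (Suc k)
  have "real (Suc k) * u (Suc k) = u k * (X + real k)" by (simp add: u_Suc field_simps)
  also have "\<dots> = X * u k + real k * u k" by (simp add: algebra_simps)
  also have "\<dots> = X * (\<Sum>l<Suc k. u l)" using Suc.IH by (simp add: algebra_simps)
  finally show ?case .
qed

lemma u_mono: "i \<le> j \<Longrightarrow> u i \<le> u j"
proof (induction j)
  case 0 thus ?case by simp
next
  case (Suc j)
  have "u j \<le> u (Suc j)"
  proof -
    have "u j * 1 \<le> u j * ((X + real j) / (real j + 1))"
      using X_ge1 u_nonneg[of j] by (intro mult_left_mono) (simp_all add: field_simps)
    thus ?thesis by (simp add: u_Suc)
  qed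
  thus ?case using Suc by (cases "i = Suc j") auto
qed

lemma abel_bound: "(\<Sum>l<k. pib (Suc l) * u (k - Suc l)) \<le> real k * u k"
proof -
  define p where "p = CHAR('a)"
  have p0: "p > 0" unfolding p_def by (rule CHAR_pos')
  define g where "g i = u (k - i)" for i
  have gmono: "g j \<le> g i" if "i \<le> j" for i j unfolding g_def using that by (intro u_mono) simp
  have "(\<Sum>l<k. pib (Suc l) * u (k - Suc l))
      \<le> (\<Sum>l<k. C * g (Suc l) + (real CARD('a) - 1) * (if p dvd Suc l then g (Suc l) else 0))"
  proof (rule sum_mono)
    fix l
    show "pib (Suc l) * u (k - Suc l) \<le> C * g (Suc l) + (real CARD('a) - 1) * (if p dvd Suc l then g (Suc l) else 0)"
      using C_ge1 q_ge2 u_nonneg[of "k - Suc l"] unfolding pib_def g_def p_def by auto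
  qed
  also have "\<dots> = C * (\<Sum>l<k. g (Suc l)) + (real CARD('a) - 1) / real p * (real p * (\<Sum>l<k. if p dvd Suc l then g (Suc l) else 0))"
    using p0 by (simp add: sum.distrib sum_distrib_left)
  also have "\<dots> \<le> C * (\<Sum>l<k. g (Suc l)) + (real CARD('a) - 1) / real p * (\<Sum>l<k. g (Suc l))"
    using q_ge2 by (intro add_left_mono mult_left_mono block_lemma gmono p0) (auto simp: g_def u_nonneg)
  also have "\<dots> = X * (\<Sum>l<k. g (Suc l))" by (simp add: X_def p_def algebra_simps)
  also have "(\<Sum>l<k. g (Suc l)) = (\<Sum>l<k. u l)" unfolding g_def by (rule sum.nat_diff_reindex)
  finally show ?thesis using u_rec[of k] by simp
qed

lemma e_bound: "c \<noteq> 0 \<Longrightarrow> cmod (e k c) \<le> u k"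
proof (induction k rule: less_induct)
  case (less k)
  show ?case
  proof (cases "k = 0")
    case True thus ?thesis by (simp add: e_0 u_def)
  next
    case False
    have "real k * cmod (e k c) = cmod (of_nat k * e k c)" by (simp add: norm_mult)
    also have "\<dots> = cmod (\<Sum>l<k. (-1) ^ l * e (k - Suc l) c * pw (Suc l) c)" by (simp add: newton_e)
    also have "\<dots> \<le> (\<Sum>l<k. cmod ((-1) ^ l * e (k - Suc l) c * pw (Suc l) c))" by (rule norm_sum)
    also have "\<dots> \<le> (\<Sum>l<k. pib (Suc l) * u (k - Suc l))"
    proof (rule sum_mono)
      fix l assume "l \<in> {..<k}"
      hence "cmod (e (k - Suc l) c) \<le> u (k - Suc l)" using less False by auto
      moreover have "cmod (pw (Suc l) c) \<le> pib (Suc l)" using less.prems by (rule pw_bound)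
      hence "cmod (pw (Suc l) c) * cmod (e (k - Suc l) c) \<le> pib (Suc l) * u (k - Suc l)"
        using \<open>cmod (e (k - Suc l) c) \<le> u (k - Suc l)\<close> by (intro mult_mono) (simp_all add: pib_nonneg)
      thus "cmod ((-1) ^ l * e (k - Suc l) c * pw (Suc l) c) \<le> pib (Suc l) * u (k - Suc l)"
        by (simp add: norm_mult norm_power mult.commute)
    qed
    also have "\<dots> \<le> real k * u k" by (rule abel_bound)
    finally show ?thesis using False by simp
  qed
qed

end

context addchar
begin

lemma sum_UNIV_split: "(\<Sum>c\<in>UNIV. f c) = f 0 + (\<Sum>c\<in>-{0::'a}. f c)"
  by (subst sum.remove[of UNIV 0]) (simp_all add: Compl_eq_Diff_UNIV)

definition sig :: "'a \<Rightarrow> 'a \<Rightarrow> complex" where "sig b c = T (-(c * b))"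

lemma sum_sig: assumes b: "b \<noteq> 0" shows "(\<Sum>c\<in>-{0}. sig b c) = - of_nat (CARD('a) - 1)"
proof -
  have "(\<Sum>c\<in>-{0}. sig b c) = (\<Sum>c\<in>-{0}. \<Sum>x\<in>-{0::'a}. \<psi> (c * (-(b * x ^ m))))"
    unfolding sig_def T_def by (simp add: algebra_simps)
  also have "\<dots> = (\<Sum>x\<in>-{0::'a}. \<Sum>c\<in>-{0}. \<psi> (c * (-(b * x ^ m))))" by (rule sum.swap)
  also have "\<dots> = (\<Sum>x\<in>-{0::'a}. -1)"
  proof (intro sum.cong refl)
    fix x :: 'a assume "x \<in> -{0}"
    hence "-(b * x ^ m) \<noteq> 0" using b by simp
    moreover have "(\<Sum>c\<in>UNIV. \<psi> (c * (-(b * x ^ m)))) = (if -(b * x ^ m) = 0 then of_nat CARD('a) else 0)"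
      by (rule orth)
    ultimately have "(\<Sum>c\<in>UNIV. \<psi> (c * (-(b * x ^ m)))) = 0" by (simp only: if_False)
    thus "(\<Sum>c\<in>-{0}. \<psi> (c * (-(b * x ^ m)))) = -1" using sum_UNIV_split[of "\<lambda>c. \<psi> (c * (-(b * x ^ m)))"]
      by (simp add: psi0 eq_neg_iff_add_eq_0 add.commute)
  qed
  also have "\<dots> = - of_nat (CARD('a) - 1)" by (simp add: card_nz)
  finally show ?thesis .
qed

lemma sumsq_sig: assumes b: "b \<noteq> 0" shows "(\<Sum>c\<in>-{0}. (cmod (sig b c))^2) \<le> (real CARD('a) - 1) * D2"
proof -
  have "(\<Sum>c\<in>-{0}. (cmod (sig b c))^2) = (\<Sum>c\<in>-{0}. (cmod (T ((-b) * c)))^2)"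
    unfolding sig_def by (simp add: mult.commute)
  also have "\<dots> = (\<Sum>c\<in>-{0}. (cmod (T c))^2)" using b by (intro sum_scale) simp
  also have "\<dots> \<le> (real CARD('a) - 1) * D2" using sumT2_nz by (simp add: D2_def)
  finally show ?thesis .
qed

lemma sumsq_pw: assumes i: "\<not> CHAR('a) dvd i" shows "(\<Sum>c\<in>-{0}. (cmod (pw i c))^2) \<le> (real CARD('a) - 1) * D2"
proof -
  have "(of_nat i :: 'a) \<noteq> 0" using i by (simp add: of_nat_eq_0_iff_char_dvd)
  hence "(\<Sum>c\<in>-{0}. (cmod (pw i c))^2) = (\<Sum>c\<in>-{0}. (cmod (T c))^2)"
    unfolding pw_def by (intro sum_scale)
  also have "\<dots> \<le> (real CARD('a) - 1) * D2" using sumT2_nz by (simp add: D2_def)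
  finally show ?thesis .
qed

lemma C_pos: "C > 0" using C_ge1 by simp

lemma sqrtq_ge1: "sqrt (real CARD('a)) \<ge> 1" using q_ge2 by simp

lemma D2_le: "D2 \<le> 2 * sqrt (real CARD('a)) * C"
proof -
  have D2p: "D2 > 0" using D2_pos by simp
  have "D2 \<le> 4 * real CARD('a) * m"
  proof -
    have "real CARD('a) * real m \<ge> 0" by simp
    moreover have "real CARD('a) \<ge> 2" using q_ge2 by simp
    ultimately show ?thesis unfolding D2_def by (simp only: mult.assoc)
  qed
  hence "D2 * D2 \<le> (4 * real CARD('a) * m) * D2" using D2p by (intro mult_right_mono) auto
  hence A: "D2 * D2 \<le> 4 * real CARD('a) * (real m * D2)" by (simp add: algebra_simps)
  have "D2 = sqrt (D2 * D2)" using D2p by simp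
  also have "\<dots> \<le> sqrt (4 * real CARD('a) * (real m * D2))" using A by (rule real_sqrt_le_mono)
  also have "\<dots> = sqrt 4 * sqrt (real CARD('a)) * sqrt (real m * D2)" by (simp only: real_sqrt_mult)
  also have "sqrt 4 = (2::real)" by (simp add: real_sqrt_four)
  finally show ?thesis unfolding C_def by simp
qed

definition good :: "('a \<Rightarrow> complex) \<Rightarrow> real \<Rightarrow> bool" where
  "good \<Phi> \<beta> \<longleftrightarrow> \<beta> \<ge> 0 \<and> ((\<forall>c. c \<noteq> 0 \<longrightarrow> \<Phi> c = complex_of_real \<beta>) \<or>
     (\<exists>i0. \<not> CHAR('a) dvd i0 \<and> (\<forall>c. c \<noteq> 0 \<longrightarrow> cmod (\<Phi> c) \<le> \<beta> / C * cmod (pw i0 c))))"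

lemma good_step: assumes g: "good \<Phi> \<beta>" shows "good (\<lambda>c. \<Phi> c * pw i c) (\<beta> * pib i)"
proof -
  have b0: "\<beta> \<ge> 0" using g by (simp add: good_def)
  have bp: "\<beta> * pib i \<ge> 0" using b0 pib_nonneg by simp
  consider (A) "\<forall>c. c \<noteq> 0 \<longrightarrow> \<Phi> c = complex_of_real \<beta>"
    | (B) i0 where "\<not> CHAR('a) dvd i0" "\<forall>c. c \<noteq> 0 \<longrightarrow> cmod (\<Phi> c) \<le> \<beta> / C * cmod (pw i0 c)"
    using g unfolding good_def by blast
  thus ?thesis
  proof cases
    case A
    show ?thesis
    proof (cases "CHAR('a) dvd i")
      case True
      have "\<forall>c. c \<noteq> 0 \<longrightarrow> \<Phi> c * pw i c = complex_of_real (\<beta> * pib i)"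
      proof (intro allI impI)
        fix c :: 'a assume "c \<noteq> 0"
        have "pw i c = complex_of_real (real CARD('a) - 1)" using pw_dvd[OF True, of c] q_ge2
          by (simp add: of_nat_diff)
        thus "\<Phi> c * pw i c = complex_of_real (\<beta> * pib i)" using A \<open>c \<noteq> 0\<close> True by (simp add: pib_def)
      qed
      thus ?thesis using bp unfolding good_def by blast
    next
      case False
      have "\<forall>c. c \<noteq> 0 \<longrightarrow> cmod (\<Phi> c * pw i c) \<le> \<beta> * pib i / C * cmod (pw i c)"
        using A False C_pos b0 by (simp add: pib_def norm_mult)
      thus ?thesis using bp False unfolding good_def by blast
    qed
  next
    case B
    have "\<forall>c. c \<noteq> 0 \<longrightarrow> cmod (\<Phi> c * pw i c) \<le> \<beta> * pib i / C * cmod (pw i0 c)"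
    proof (intro allI impI)
      fix c :: 'a assume c: "c \<noteq> 0"
      have "cmod (\<Phi> c * pw i c) = cmod (\<Phi> c) * cmod (pw i c)" by (simp add: norm_mult)
      also have "\<dots> \<le> (\<beta> / C * cmod (pw i0 c)) * pib i"
        using B(2) c pw_bound[OF c, of i] b0 C_pos by (intro mult_mono) auto
      also have "\<dots> = \<beta> * pib i / C * cmod (pw i0 c)" by simp
      finally show "cmod (\<Phi> c * pw i c) \<le> \<beta> * pib i / C * cmod (pw i0 c)" .
    qed
    thus ?thesis using bp B(1) unfolding good_def by blast
  qed
qed

lemma good_base:
  assumes b: "b \<noteq> 0" and g: "good \<Phi> \<beta>"
  shows "cmod (\<Sum>c\<in>-{0}. \<Phi> c * sig b c) \<le> 2 * sqrt (real CARD('a)) * (real CARD('a) - 1) * \<beta>"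
proof -
  have b0: "\<beta> \<ge> 0" using g by (simp add: good_def)
  have q1: "real CARD('a) - 1 \<ge> 0" using q_ge2 by simp
  consider (A) "\<forall>c. c \<noteq> 0 \<longrightarrow> \<Phi> c = complex_of_real \<beta>"
    | (B) i0 where "\<not> CHAR('a) dvd i0" "\<forall>c. c \<noteq> 0 \<longrightarrow> cmod (\<Phi> c) \<le> \<beta> / C * cmod (pw i0 c)"
    using g unfolding good_def by blast
  thus ?thesis
  proof cases
    case A
    have "(\<Sum>c\<in>-{0}. \<Phi> c * sig b c) = (\<Sum>c\<in>-{0}. complex_of_real \<beta> * sig b c)"
      using A by (intro sum.cong refl) auto
    also have "\<dots> = complex_of_real \<beta> * (- of_nat (CARD('a) - 1))" by (simp add: sum_distrib_left[symmetric] sum_sig[OF b])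
    finally have eq: "(\<Sum>c\<in>-{0}. \<Phi> c * sig b c) = complex_of_real \<beta> * (- of_nat (CARD('a) - 1))" .
    have "cmod (\<Sum>c\<in>-{0}. \<Phi> c * sig b c) = \<beta> * real (CARD('a) - 1)"
      unfolding eq by (simp only: norm_mult norm_minus_cancel norm_of_nat norm_of_real abs_of_nonneg[OF b0])
    hence "cmod (\<Sum>c\<in>-{0}. \<Phi> c * sig b c) = \<beta> * (real CARD('a) - 1)"
      using q_ge2 by (simp add: of_nat_diff)
    also have "\<dots> \<le> (2 * sqrt (real CARD('a))) * ((real CARD('a) - 1) * \<beta>)"
    proof -
      have "1 * ((real CARD('a) - 1) * \<beta>) \<le> (2 * sqrt (real CARD('a))) * ((real CARD('a) - 1) * \<beta>)"
      proof (rule mult_right_mono)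
        show "1 \<le> 2 * sqrt (real CARD('a))" using sqrtq_ge1 by linarith
        show "0 \<le> (real CARD('a) - 1) * \<beta>" using b0 q1 by simp
      qed
      thus ?thesis by (simp add: mult_ac)
    qed
    finally show ?thesis by (simp add: mult.assoc)
  next
    case B
    have "cmod (\<Sum>c\<in>-{0}. \<Phi> c * sig b c) \<le> (\<Sum>c\<in>-{0}. cmod (\<Phi> c) * cmod (sig b c))"
      by (rule order.trans[OF norm_sum]) (simp add: norm_mult)
    also have "\<dots> \<le> (\<Sum>c\<in>-{0}. \<beta> / C * ((cmod (pw i0 c))^2 + (cmod (sig b c))^2) / 2)"
    proof (rule sum_mono)
      fix c :: 'a assume "c \<in> -{0}"
      hence "cmod (\<Phi> c) * cmod (sig b c) \<le> (\<beta> / C * cmod (pw i0 c)) * cmod (sig b c)"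
        using B(2) by (intro mult_right_mono) auto
      also have "\<dots> = \<beta> / C * (cmod (pw i0 c) * cmod (sig b c))" by simp
      also have "\<dots> \<le> \<beta> / C * (((cmod (pw i0 c))^2 + (cmod (sig b c))^2) / 2)"
      proof (intro mult_left_mono)
        show "cmod (pw i0 c) * cmod (sig b c) \<le> ((cmod (pw i0 c))^2 + (cmod (sig b c))^2) / 2"
          using sum_squares_bound[of "cmod (pw i0 c)" "cmod (sig b c)"] by simp
        show "0 \<le> \<beta> / C" using b0 C_pos by simp
      qed
      finally show "cmod (\<Phi> c) * cmod (sig b c) \<le> \<beta> / C * ((cmod (pw i0 c))^2 + (cmod (sig b c))^2) / 2" by simp
    qed
    also have "\<dots> = (\<Sum>c\<in>-{0}. \<beta> / C / 2 * (cmod (pw i0 c))^2 + \<beta> / C / 2 * (cmod (sig b c))^2)"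
      by (intro sum.cong refl) (simp add: ring_distribs add_divide_distrib)
    also have "\<dots> = \<beta> / C / 2 * ((\<Sum>c\<in>-{0}. (cmod (pw i0 c))^2) + (\<Sum>c\<in>-{0}. (cmod (sig b c))^2))"
      by (simp add: sum.distrib sum_distrib_left distrib_left)
    also have "\<dots> \<le> \<beta> / C / 2 * ((real CARD('a) - 1) * D2 + (real CARD('a) - 1) * D2)"
      using sumsq_pw[OF B(1)] sumsq_sig[OF b] b0 C_pos by (intro mult_left_mono add_mono) auto
    also have "\<dots> = (real CARD('a) - 1) * \<beta> * (D2 / C)" using C_pos by (simp add: field_simps)
    also have "\<dots> \<le> (real CARD('a) - 1) * \<beta> * (2 * sqrt (real CARD('a)))"
    proof (intro mult_left_mono)
      show "D2 / C \<le> 2 * sqrt (real CARD('a))" using D2_le C_pos by (simp add: divide_le_eq)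
      show "0 \<le> (real CARD('a) - 1) * \<beta>" using q1 b0 by simp
    qed
    finally show ?thesis by (simp add: algebra_simps)
  qed
qed

lemma main_ind:
  assumes b: "b \<noteq> 0"
  shows "good \<Phi> \<beta> \<Longrightarrow> cmod (\<Sum>c\<in>-{0}. \<Phi> c * e k c * sig b c) \<le> 2 * sqrt (real CARD('a)) * (real CARD('a) - 1) * \<beta> * u k"
proof (induction k arbitrary: \<Phi> \<beta> rule: less_induct)
  case (less k)
  define K where "K = 2 * sqrt (real CARD('a)) * (real CARD('a) - 1)"
  have K0: "K \<ge> 0" unfolding K_def using q_ge2 by simp
  have b0: "\<beta> \<ge> 0" using less.prems by (simp add: good_def)
  show ?case
  proof (cases "k = 0")
    case True
    thus ?thesis using good_base[OF b less.prems] by (simp add: e_0 u_def)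
  next
    case False
    have "real k * cmod (\<Sum>c\<in>-{0}. \<Phi> c * e k c * sig b c) = cmod (\<Sum>c\<in>-{0}. \<Phi> c * (of_nat k * e k c) * sig b c)"
      by (simp add: norm_mult sum_distrib_left[symmetric] mult_ac)
    also have "(\<Sum>c\<in>-{0}. \<Phi> c * (of_nat k * e k c) * sig b c)
        = (\<Sum>c\<in>-{0}. \<Sum>l<k. (-1) ^ l * ((\<Phi> c * pw (Suc l) c) * e (k - Suc l) c * sig b c))"
      by (simp add: newton_e sum_distrib_left sum_distrib_right mult_ac)
    also have "\<dots> = (\<Sum>l<k. (-1) ^ l * (\<Sum>c\<in>-{0}. (\<Phi> c * pw (Suc l) c) * e (k - Suc l) c * sig b c))"
      by (subst sum.swap) (simp add: sum_distrib_left)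
    also have "cmod \<dots> \<le> (\<Sum>l<k. cmod (\<Sum>c\<in>-{0}. (\<Phi> c * pw (Suc l) c) * e (k - Suc l) c * sig b c))"
      by (rule order.trans[OF norm_sum]) (simp add: norm_mult norm_power)
    also have "\<dots> \<le> (\<Sum>l<k. K * (\<beta> * pib (Suc l)) * u (k - Suc l))"
    proof (rule sum_mono)
      fix l assume "l \<in> {..<k}"
      hence "k - Suc l < k" by auto
      from less.IH[OF this good_step[OF less.prems, of "Suc l"]]
      show "cmod (\<Sum>c\<in>-{0}. (\<Phi> c * pw (Suc l) c) * e (k - Suc l) c * sig b c) \<le> K * (\<beta> * pib (Suc l)) * u (k - Suc l)"
        unfolding K_def by simp
    qed
    also have "\<dots> = K * \<beta> * (\<Sum>l<k. pib (Suc l) * u (k - Suc l))"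
      by (simp add: sum_distrib_left mult_ac)
    also have "\<dots> \<le> K * \<beta> * (real k * u k)"
      using K0 b0 by (intro mult_left_mono abel_bound) auto
    finally have "real k * cmod (\<Sum>c\<in>-{0}. \<Phi> c * e k c * sig b c) \<le> real k * (K * \<beta> * u k)"
      by (simp add: mult_ac)
    thus ?thesis using False unfolding K_def by simp
  qed
qed

lemma good_one: "good (\<lambda>c. 1) 1"
  unfolding good_def by simp

lemma final0:
  "\<bar>real (nn k 0) - real ((CARD('a) - 1) choose k) / real CARD('a)\<bar> \<le> u k"
proof -
  let ?q = "real CARD('a)" and ?B = "real ((CARD('a) - 1) choose k)"
  have "complex_of_real (?q * real (nn k 0) - ?B) = (\<Sum>c\<in>-{0}. e k c)"
    using count_n[of k 0] sum_UNIV_split[of "e k"] by (simp add: psi0 e_at0)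
  hence "\<bar>?q * real (nn k 0) - ?B\<bar> = cmod (\<Sum>c\<in>-{0}. e k c)" by (metis norm_of_real)
  also have "\<dots> \<le> (\<Sum>c\<in>-{0::'a}. u k)" by (rule order.trans[OF norm_sum]) (intro sum_mono e_bound, simp)
  also have "\<dots> = (?q - 1) * u k" using card_nz q_ge2 by (simp add: of_nat_diff)
  finally have A: "\<bar>?q * real (nn k 0) - ?B\<bar> \<le> (?q - 1) * u k" .
  have qp: "?q > 0" using q_ge2 by simp
  have "\<bar>real (nn k 0) - ?B / ?q\<bar> = \<bar>?q * real (nn k 0) - ?B\<bar> / ?q"
    using qp by (simp add: field_simps abs_div_pos[symmetric] abs_divide)
  also have "\<dots> \<le> (?q - 1) * u k / ?q" using A qp by (simp add: divide_right_mono)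
  also have "\<dots> \<le> u k" using qp u_nonneg[of k] by (simp add: field_simps)
  finally show ?thesis .
qed

lemma finalb:
  assumes b: "b \<noteq> 0"
  shows "\<bar>real (nn k b) - real ((CARD('a) - 1) choose k) / real CARD('a)\<bar> \<le> 2 * u k / sqrt (real CARD('a))"
proof -
  let ?q = "real CARD('a)" and ?B = "real ((CARD('a) - 1) choose k)"
  have qp: "?q > 0" "?q - 1 > 0" using q_ge2 by simp_all
  have "(\<Sum>t\<in>-{0::'a}. of_nat CARD('a) * of_nat (nn k (b * t ^ m))) = (\<Sum>t\<in>-{0::'a}. of_nat CARD('a) * (of_nat (nn k b) :: complex))"
    by (intro sum.cong refl) (simp add: nn_scale)
  also have "\<dots> = of_nat (CARD('a) - 1) * of_nat CARD('a) * of_nat (nn k b)" by (simp add: card_nz)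
  finally have L: "(\<Sum>t\<in>-{0::'a}. of_nat CARD('a) * of_nat (nn k (b * t ^ m))) = of_nat (CARD('a) - 1) * of_nat CARD('a) * (of_nat (nn k b) :: complex)" .
  have "(\<Sum>t\<in>-{0::'a}. of_nat CARD('a) * of_nat (nn k (b * t ^ m))) = (\<Sum>t\<in>-{0::'a}. \<Sum>c\<in>UNIV. \<psi> (-(c * (b * t ^ m))) * e k c)"
    by (simp add: count_n)
  also have "\<dots> = (\<Sum>c\<in>UNIV. \<Sum>t\<in>-{0::'a}. \<psi> (-(c * (b * t ^ m))) * e k c)" by (rule sum.swap)
  also have "\<dots> = (\<Sum>c\<in>UNIV. sig b c * e k c)"
    unfolding sig_def T_def sum_distrib_right
  proof (intro sum.cong refl)
    fix c t :: 'a
    show "\<psi> (-(c * (b * t ^ m))) * e k c = \<psi> (-(c * b) * t ^ m) * e k c" by (simp add: algebra_simps)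
  qed
  also have "\<dots> = of_nat (CARD('a) - 1) * of_nat ((CARD('a) - 1) choose k) + (\<Sum>c\<in>-{0}. (\<lambda>c. 1) c * e k c * sig b c)"
    by (subst sum_UNIV_split) (simp add: sig_def T0 e_at0 mult.commute)
  finally have "of_nat (CARD('a) - 1) * (of_nat CARD('a) * of_nat (nn k b) - of_nat ((CARD('a) - 1) choose k))
      = (\<Sum>c\<in>-{0}. (\<lambda>c. 1) c * e k c * sig b c)"
    using L by (simp add: algebra_simps)
  hence "complex_of_real ((?q - 1) * (?q * real (nn k b) - ?B)) = (\<Sum>c\<in>-{0}. (\<lambda>c. 1) c * e k c * sig b c)"
    using q_ge2 by (simp add: of_nat_diff)
  hence "\<bar>(?q - 1) * (?q * real (nn k b) - ?B)\<bar> \<le> 2 * sqrt ?q * (?q - 1) * 1 * u k"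
    using main_ind[OF b good_one, of k] by (metis norm_of_real)
  hence "(?q - 1) * \<bar>?q * real (nn k b) - ?B\<bar> \<le> (?q - 1) * (2 * sqrt ?q * u k)"
    using qp by (simp add: abs_mult mult_ac)
  hence A: "\<bar>?q * real (nn k b) - ?B\<bar> \<le> 2 * sqrt ?q * u k" using qp by simp
  have "\<bar>real (nn k b) - ?B / ?q\<bar> = \<bar>?q * real (nn k b) - ?B\<bar> / ?q"
    using qp by (simp add: field_simps abs_div_pos[symmetric] abs_divide)
  also have "\<dots> \<le> 2 * sqrt ?q * u k / ?q" using A qp by (simp add: divide_right_mono)
  also have "\<dots> = 2 * u k / sqrt ?q"
    using qp by (simp add: field_simps)
  finally show ?thesis .
qed

end

lemma card_perms_of_set:
  assumes "finite A"
  shows "card {xs. set xs = A \<and> distinct xs} = fact (card A)"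
proof -
  have "{xs. set xs = A \<and> distinct xs} = {xs. length xs = card A \<and> distinct xs \<and> set xs \<subseteq> A}"
  proof (intro set_eqI iffI)
    fix xs assume "xs \<in> {xs. set xs = A \<and> distinct xs}"
    thus "xs \<in> {xs. length xs = card A \<and> distinct xs \<and> set xs \<subseteq> A}" by (auto simp: distinct_card)
  next
    fix xs assume xs: "xs \<in> {xs. length xs = card A \<and> distinct xs \<and> set xs \<subseteq> A}"
    hence "card (set xs) = card A" by (auto simp: distinct_card)
    hence "set xs = A" using xs assms by (intro card_subset_eq) auto
    thus "xs \<in> {xs. set xs = A \<and> distinct xs}" using xs by simp
  qed
  also have "card \<dots> = \<Prod>{card A - card A + 1..card A}" by (rule card_lists_distinct_length_eq[OF assms]) simp
  also have "\<dots> = fact (card A)" by (simp add: fact_prod)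
  finally show ?thesis .
qed

lemma Nstar_eq:
  "Nstar m k b = fact k * card {A. A \<subseteq> -{0::'a::{finite,field}} \<and> card A = k \<and> (\<Sum>x\<in>A. x ^ m) = b}"
proof -
  define G where "G = {A. A \<subseteq> -{0::'a} \<and> card A = k \<and> (\<Sum>x\<in>A. x ^ m) = b}"
  have eq: "{xs :: 'a list. length xs = k \<and> distinct xs \<and> 0 \<notin> set xs \<and> (\<Sum>x\<leftarrow>xs. x ^ m) = b}
      = (\<Union>A\<in>G. {xs. set xs = A \<and> distinct xs})"
  proof (intro set_eqI iffI)
    fix xs :: "'a list"
    assume "xs \<in> {xs :: 'a list. length xs = k \<and> distinct xs \<and> 0 \<notin> set xs \<and> (\<Sum>x\<leftarrow>xs. x ^ m) = b}"
    hence xs: "length xs = k" "distinct xs" "0 \<notin> set xs" "(\<Sum>x\<leftarrow>xs. x ^ m) = b" by auto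
    have "set xs \<in> G" using xs by (auto simp: G_def distinct_card sum_list_distinct_conv_sum_set)
    thus "xs \<in> (\<Union>A\<in>G. {xs. set xs = A \<and> distinct xs})" using xs by auto
  next
    fix xs :: "'a list"
    assume "xs \<in> (\<Union>A\<in>G. {xs. set xs = A \<and> distinct xs})"
    then obtain A where A: "A \<in> G" "set xs = A" "distinct xs" by auto
    thus "xs \<in> {xs :: 'a list. length xs = k \<and> distinct xs \<and> 0 \<notin> set xs \<and> (\<Sum>x\<leftarrow>xs. x ^ m) = b}"
      by (auto simp: G_def distinct_card[symmetric] sum_list_distinct_conv_sum_set)
  qed
  have fin: "finite {xs. set xs = A \<and> distinct xs}" for A :: "'a set"
  proof -
    have "card {xs. set xs = A \<and> distinct xs} > 0" using card_perms_of_set[of A] by simp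
    thus ?thesis by (rule card_ge_0_finite)
  qed
  have "Nstar m k b = card (\<Union>A\<in>G. {xs. set xs = A \<and> distinct xs})"
    unfolding Nstar_def eq ..
  also have "\<dots> = (\<Sum>A\<in>G. card {xs. set xs = A \<and> distinct xs})"
    by (rule card_UN_disjoint) (auto simp: fin)
  also have "\<dots> = (\<Sum>A\<in>G. fact k)"
    by (intro sum.cong refl) (auto simp: G_def card_perms_of_set)
  also have "\<dots> = fact k * card G" by simp
  finally show ?thesis unfolding G_def .
qed

lemma falling_binom:
  assumes "k \<le> n"
  shows "falling_fact (real n) k = fact k * real (n choose k)"
proof -
  have "real (n choose k) = (of_nat n gchoose k :: real)" by (rule binomial_gbinomial)
  also have "\<dots> = (\<Prod>i=0..<k. real n - real i) / fact k" by (simp add: gbinomial_prod_rev)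
  finally show ?thesis by (simp add: falling_fact_def atLeast0LessThan)
qed

context addchar
begin

lemma nn_eq: "nn k b = card {A. A \<subseteq> -{0::'a} \<and> card A = k \<and> (\<Sum>x\<in>A. x ^ m) = b}"
  unfolding nn_def AA_def by (rule arg_cong[where f = card]) auto

lemma C_le: "C \<le> real m * sqrt (real CARD('a))"
proof -
  have "D2 \<le> real CARD('a) * real m" unfolding D2_def using q_ge2 by simp
  hence "real m * D2 \<le> real m * (real CARD('a) * real m)" by (intro mult_left_mono) auto
  hence "C \<le> sqrt (real m * (real CARD('a) * real m))" unfolding C_def by simp
  also have "real m * (real CARD('a) * real m) = (real m)^2 * real CARD('a)" by (simp add: power2_eq_square)
  also have "sqrt \<dots> = real m * sqrt (real CARD('a))" by (simp add: real_sqrt_mult)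
  finally show ?thesis .
qed

lemma poch_le:
  "pochhammer X k \<le> falling_fact (real m * sqrt (real CARD('a)) + real k + real CARD('a) / real CHAR('a)) k"
proof -
  define Tt where "Tt = real m * sqrt (real CARD('a)) + real k + real CARD('a) / real CHAR('a)"
  have XT: "X + real k - 1 \<le> Tt"
  proof -
    have "(real CARD('a) - 1) / real CHAR('a) \<le> real CARD('a) / real CHAR('a)"
      using CHAR_pos' by (simp add: divide_right_mono)
    thus ?thesis using C_le unfolding X_def Tt_def by linarith
  qed
  have "pochhammer X k = (\<Prod>i<k. X + real i)" by (simp add: pochhammer_prod atLeast0LessThan)
  also have "\<dots> = (\<Prod>i<k. X + real (k - Suc i))" by (rule prod.nat_diff_reindex[symmetric])
  also have "\<dots> \<le> (\<Prod>i<k. Tt - real i)"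
  proof (rule prod_mono)
    fix i assume "i \<in> {..<k}"
    hence "real (k - Suc i) = real k - 1 - real i" by (simp add: of_nat_diff)
    thus "0 \<le> X + real (k - Suc i) \<and> X + real (k - Suc i) \<le> Tt - real i"
      using XT X_ge1 by simp
  qed
  also have "\<dots> = falling_fact Tt k" by (simp add: falling_fact_def)
  finally show ?thesis unfolding Tt_def .
qed

end

lemma mainTheorem3_aux:
  fixes m k :: nat and b :: "'a::{finite,field}"
  assumes "m > 0" and "k \<le> CARD('a) - 1"
  shows "(b \<noteq> 0 \<longrightarrow>
      \<bar>real (Nstar m k b) - falling_fact (real CARD('a) - 1) k / real CARD('a)\<bar>
        \<le> 2 / sqrt (real CARD('a)) * falling_fact (real m * sqrt (real CARD('a)) + real k + real CARD('a) / real CHAR('a)) k)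
    \<and> (b = 0 \<longrightarrow>
      \<bar>real (Nstar m k b) - falling_fact (real CARD('a) - 1) k / real CARD('a)\<bar>
        \<le> falling_fact (real m * sqrt (real CARD('a)) + real k + real CARD('a) / real CHAR('a)) k)"
proof -
  obtain \<psi> :: "'a \<Rightarrow> complex" where psi: "\<And>x y. \<psi> (x + y) = \<psi> x * \<psi> y" "\<And>x. norm (\<psi> x) = 1" "\<exists>x. \<psi> x \<noteq> 1"
    using exists_addchar by blast
  interpret addchar \<psi> m using psi assms(1) by unfold_locales auto
  let ?q = "real CARD('a)"
  let ?F = "falling_fact (real m * sqrt (real CARD('a)) + real k + real CARD('a) / real CHAR('a)) k"
  have qp: "?q > 0" using q_ge2 by simp
  have ff: "falling_fact (?q - 1) k = fact k * real ((CARD('a) - 1) choose k)"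
    using falling_binom[OF assms(2)] q_ge2 by (simp add: of_nat_diff)
  have N: "real (Nstar m k b) = fact k * real (nn k b)" by (simp add: Nstar_eq nn_eq)
  have fu: "fact k * u k = pochhammer X k" by (simp add: u_def)
  have "real (Nstar m k b) - falling_fact (?q - 1) k / ?q
      = fact k * (real (nn k b) - real ((CARD('a) - 1) choose k) / ?q)"
    by (simp add: N ff right_diff_distrib)
  hence diff: "\<bar>real (Nstar m k b) - falling_fact (?q - 1) k / ?q\<bar>
      = fact k * \<bar>real (nn k b) - real ((CARD('a) - 1) choose k) / ?q\<bar>"
    by (simp add: abs_mult)
  show ?thesis
  proof (intro conjI impI)
    assume b: "b \<noteq> 0"
    have "fact k * \<bar>real (nn k b) - real ((CARD('a) - 1) choose k) / ?q\<bar> \<le> fact k * (2 * u k / sqrt ?q)"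
      by (intro mult_left_mono finalb[OF b]) simp
    also have "\<dots> = 2 / sqrt ?q * pochhammer X k" by (simp add: fu[symmetric])
    also have "\<dots> \<le> 2 / sqrt ?q * ?F" by (intro mult_left_mono poch_le) simp
    finally show "\<bar>real (Nstar m k b) - falling_fact (?q - 1) k / ?q\<bar> \<le> 2 / sqrt ?q * ?F" using diff by simp
  next
    assume b: "b = 0"
    have "fact k * \<bar>real (nn k b) - real ((CARD('a) - 1) choose k) / ?q\<bar> \<le> fact k * u k"
      using final0[of k] b by (intro mult_left_mono) simp_all
    also have "\<dots> \<le> ?F" using fu poch_le by simp
    finally show "\<bar>real (Nstar m k b) - falling_fact (?q - 1) k / ?q\<bar> \<le> ?F" using diff by simp
  qed
qed

theorem mainTheorem3:
  fixes m k :: nat and b :: "'a::{finite,field}"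
  defines "q \<equiv> CARD('a::{finite,field})" and "p \<equiv> CHAR('a::{finite,field})"
  assumes "m > 0" and "m dvd q - 1" and "k \<le> q - 1"
  shows "(b \<noteq> 0 \<longrightarrow>
      \<bar>real (Nstar m k b) - falling_fact (real q - 1) k / real q\<bar>
        \<le> 2 / sqrt (real q) * falling_fact (real m * sqrt (real q) + real k + real q / real p) k)
    \<and> (b = 0 \<longrightarrow>
      \<bar>real (Nstar m k b) - falling_fact (real q - 1) k / real q\<bar>
        \<le> falling_fact (real m * sqrt (real q) + real k + real q / real p) k)"
proof -
  have k: "k \<le> CARD('a) - 1" using assms(5) unfolding q_def .
  show ?thesis unfolding q_def p_def by (rule mainTheorem3_aux[OF assms(3) k])
qed

end
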